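(* Let $F_1$ and $F_2$ be sensori-computational devices, and let $R_1\subseteq A\times B$ and $R_2\subseteq C\times E$ be length compatible relations such that $F_1$ is output simulatable modulo $R_1$ and $F_2$ is output simulatable modulo $R_2$. Define the relation $R_{1\times2}$ on sequences of pairs by: $\big((a_1,c_1)\cdots(a_n,c_n)\big)\,R_{1\times2}\,\big((b_1,e_1)\cdots(b_m,e_m)\big)$ if and only if $(a_1\cdots a_n)\,R_1\,(b_1\cdots b_m)$ and $(c_1\cdots c_n)\,R_2\,(e_1\cdots e_m)$. Then the direct product $F_1\times F_2$ is output simulatable modulo $R_{1\times2}$.
   Context: A sensori-computational device is a 6-tuple $F=(V,V_0,Y,\tau,C,c)$ where $V$ is a non-empty finite set of states, $V_0\subseteq V$ a non-empty set of initial states, $Y=Y(F)$ a finite set of observations, $\tau:V\times V\to\mathcal{P}(Y)$, $C$ a set of outputs, $c:V\to\mathcal{P}(C)\setminus\{\emptyset\}$. A string $y_1\cdots y_n$ reaches $w$ from $v$ if there are states $w_0=v,\dots,w_n=w$ with $y_i\in\tau(w_{i-1},w_i)$; $\mathcal{R}_F(s)$ is the set of states reached by $s$ from some initial state; $\mathcal{L}(F)=\{s\in Y^*:\mathcal{R}_F(s)\ne\emptyset\}$; $\mathcal{C}_F(s)=\bigcup_{v\in\mathcal{R}_F(s)}c(v)$. For a relation $R\subseteq A\times B$ between sets of strings, $F'$ output simulates $F$ modulo $R$ if for every $s\in\mathcal{L}(F)$: (1) some $t\in\mathcal{L}(F')$ has $s\,R\,t$; (2) every $t\in B$ with $s\,R\,t$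 satisfies $t\in\mathcal{L}(F')$ and $\mathcal{C}_F(s)\supseteq\mathcal{C}_{F'}(t)$; $F$ is output simulatable modulo $R$ if some device $F'$ output simulates $F$ modulo $R$. The direct product of $F=(V,V_0,Y,\tau,C,c)$ and $F'=(V',V_0',Y',\tau',C',c')$ is $F\times F'=(V\times V',V_0\times V_0',Y\times Y',\tau_{\times},C\times C',c_{\times})$ with $\tau_\times((v,v'),(w,w'))=\tau(v,w)\times\tau'(v',w')$ and $c_\times(v,v')=c(v)\times c'(v')$. Relations $R_1\subseteq A\times B$ and $R_2\subseteq C\times E$, where $A,B,C,E$ are sets of sequences over some alphabets, are length compatible if for every $a\in A$ and $c\in C$ with $|a|=|c|$ there exist $b$ and $e$ with $|b|=|e|$, $a\,R_1\,b$ and $c\,R_2\,e$. *)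

theory Defs
  imports Main
begin

record ('v, 'y, 'c) device =
  states :: "'v set"
  init   :: "'v set"
  obs    :: "'y set"
  trans  :: "'v \<Rightarrow> 'v \<Rightarrow> 'y set"
  outs   :: "'c set"
  out    :: "'v \<Rightarrow> 'c set"

definition wf_device :: "('v, 'y, 'c) device \<Rightarrow> bool" where
  "wf_device F \<longleftrightarrow>
     finite (states F) \<and> states F \<noteq> {} \<and>
     init F \<subseteq> states F \<and> init F \<noteq> {} \<and>
     finite (obs F) \<and>
     (\<forall>v\<in>states F. \<forall>w\<in>states F. trans F v w \<subseteq> obs F) \<and>
     (\<forall>v\<in>states F. out F v \<subseteq> outs F \<and> out F v \<noteq> {})"

fun reaches :: "('v, 'y, 'c) device \<Rightarrow> 'v \<Rightarrow> 'y list \<Rightarrow> 'v \<Rightarrow> bool" where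
  "reaches F v [] w \<longleftrightarrow> v \<in> states F \<and> v = w"
| "reaches F v (y # ys) w \<longleftrightarrow>
     v \<in> states F \<and> (\<exists>u\<in>states F. y \<in> trans F v u \<and> reaches F u ys w)"

definition reached :: "('v, 'y, 'c) device \<Rightarrow> 'y list \<Rightarrow> 'v set" where
  "reached F s = {w. \<exists>v\<in>init F. reaches F v s w}"

definition lang :: "('v, 'y, 'c) device \<Rightarrow> 'y list set" where
  "lang F = {s. reached F s \<noteq> {}}"

definition outputs :: "('v, 'y, 'c) device \<Rightarrow> 'y list \<Rightarrow> 'c set" where
  "outputs F s = (\<Union>v\<in>reached F s. out F v)"

text \<open>F' output simulates F modulo R (R \<subseteq> A \<times> B, so "t \<in> B with s R t" is just (s,t) \<in> R).\<close>
definition output_simulates ::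
  "('w, 'z, 'c) device \<Rightarrow> ('v, 'y, 'c) device \<Rightarrow> ('y list \<times> 'z list) set \<Rightarrow> bool" where
  "output_simulates F' F R \<longleftrightarrow> wf_device F' \<and>
     (\<forall>s\<in>lang F. (\<exists>t\<in>lang F'. (s, t) \<in> R) \<and>
        (\<forall>t. (s, t) \<in> R \<longrightarrow> t \<in> lang F' \<and> outputs F' t \<subseteq> outputs F s))"

text \<open>Output simulatable: some device (with states encoded as natural numbers;
  every finite state set is isomorphic to a finite set of naturals) output simulates F.\<close>
definition output_simulatable ::
  "('v, 'y, 'c) device \<Rightarrow> ('y list \<times> 'z list) set \<Rightarrow> bool" where
  "output_simulatable F R \<longleftrightarrow> (\<exists>F' :: (nat, 'z, 'c) device. output_simulates F' F R)"

definition direct_product ::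
  "('v, 'y, 'c) device \<Rightarrow> ('v2, 'y2, 'c2) device \<Rightarrow> ('v \<times> 'v2, 'y \<times> 'y2, 'c \<times> 'c2) device" where
  "direct_product F G =
     \<lparr> states = states F \<times> states G,
       init = init F \<times> init G,
       obs = obs F \<times> obs G,
       trans = (\<lambda>(v, v') (w, w'). trans F v w \<times> trans G v' w'),
       outs = outs F \<times> outs G,
       out = (\<lambda>(v, v'). out F v \<times> out G v') \<rparr>"

definition length_compatible ::
  "'a list set \<Rightarrow> 'c list set \<Rightarrow> ('a list \<times> 'b list) set \<Rightarrow> ('c list \<times> 'e list) set \<Rightarrow> bool" where
  "length_compatible A C R1 R2 \<longleftrightarrow>
     (\<forall>a\<in>A. \<forall>c\<in>C. length a = length c \<longrightarrow>
        (\<exists>b e. length b = length e \<and> (a, b) \<in> R1 \<and> (c, e) \<in> R2))"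

definition prod_rel ::
  "('a list \<times> 'b list) set \<Rightarrow> ('c list \<times> 'e list) set \<Rightarrow> (('a \<times> 'c) list \<times> ('b \<times> 'e) list) set" where
  "prod_rel R1 R2 = {(p, q). (map fst p, map fst q) \<in> R1 \<and> (map snd p, map snd q) \<in> R2}"

end

theory Submission
  imports Defs "HOL-Library.Nat_Bijection"
begin

lemma reaches_states: "reaches F v s w \<Longrightarrow> v \<in> states F \<and> w \<in> states F"
  by (induction s arbitrary: v) auto

lemma reaches_prod:
  "reaches (direct_product F G) (v, v') s (w, w') \<longleftrightarrow>
     reaches F v (map fst s) w \<and> reaches G v' (map snd s) w'"
proof (induction s arbitrary: v v')
  case Nil
  then show ?case by (auto simp: direct_product_def)
next
  case (Cons y ys)
  obtain a b where y: "y = (a, b)" by fastforce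
  show ?case
    using Cons by (auto simp: direct_product_def y)
qed

lemma reached_prod:
  "reached (direct_product F G) s = reached F (map fst s) \<times> reached G (map snd s)"
  unfolding reached_def
  apply (auto simp: reaches_prod)
   apply (auto simp: direct_product_def reaches_prod[unfolded direct_product_def, simplified])
  done

lemma lang_prod:
  "s \<in> lang (direct_product F G) \<longleftrightarrow> map fst s \<in> lang F \<and> map snd s \<in> lang G"
  unfolding lang_def by (auto simp: reached_prod)

lemma outputs_prod:
  "outputs (direct_product F G) s = outputs F (map fst s) \<times> outputs G (map snd s)"
  unfolding outputs_def reached_prod by (auto simp: direct_product_def)

lemma wf_prod:
  assumes "wf_device F" "wf_device G"
  shows "wf_device (direct_product F G)"
  using assms unfolding wf_device_def direct_product_def
  by (auto simp: subset_iff)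

definition ren :: "(nat \<times> nat, 'y, 'c) device \<Rightarrow> (nat, 'y, 'c) device" where
  "ren F = \<lparr> states = prod_encode ` states F, init = prod_encode ` init F,
     obs = obs F, trans = (\<lambda>v w. trans F (prod_decode v) (prod_decode w)),
     outs = outs F, out = (\<lambda>v. out F (prod_decode v)) \<rparr>"

lemma mem_enc: "v \<in> prod_encode ` S \<longleftrightarrow> prod_decode v \<in> S"
  by (metis image_iff prod_decode_inverse prod_encode_inverse)

lemma my_bex_image: "(\<exists>x\<in>f ` A. P x) \<longleftrightarrow> (\<exists>x\<in>A. P (f x))"
  by blast

lemma reaches_ren:
  "reaches (ren F) v s w \<longleftrightarrow> reaches F (prod_decode v) s (prod_decode w)"
proof (induction s arbitrary: v)
  case Nil
  then show ?case by (auto simp: ren_def mem_enc)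
next
  case (Cons y ys)
  have st: "states (ren F) = prod_encode ` states F" and tr: "trans (ren F) = (\<lambda>v w. trans F (prod_decode v) (prod_decode w))"
    by (simp_all add: ren_def)
  have "reaches (ren F) v (y # ys) w \<longleftrightarrow>
    prod_decode v \<in> states F \<and> (\<exists>u\<in>prod_encode ` states F. y \<in> trans F (prod_decode v) (prod_decode u) \<and> reaches (ren F) u ys w)"
    by (simp only: reaches.simps st tr mem_enc)
  also have "\<dots> \<longleftrightarrow> prod_decode v \<in> states F \<and> (\<exists>u\<in>states F. y \<in> trans F (prod_decode v) u \<and> reaches F u ys (prod_decode w))"
    by (simp only: my_bex_image prod_encode_inverse Cons.IH)
  also have "\<dots> \<longleftrightarrow> reaches F (prod_decode v) (y # ys) (prod_decode w)"
    by (simp only: reaches.simps)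
  finally show ?case .
qed

lemma reached_ren: "reached (ren F) s = prod_encode ` reached F s"
proof
  show "reached (ren F) s \<subseteq> prod_encode ` reached F s"
  proof
    fix x assume "x \<in> reached (ren F) s"
    then obtain v where v: "v \<in> init (ren F)" "reaches (ren F) v s x"
      unfolding reached_def by blast
    then have "prod_decode v \<in> init F" by (simp add: ren_def mem_enc)
    with v have "prod_decode x \<in> reached F s" by (auto simp: reached_def reaches_ren)
    then show "x \<in> prod_encode ` reached F s" by (metis image_eqI prod_decode_inverse)
  qed
next
  show "prod_encode ` reached F s \<subseteq> reached (ren F) s"
  proof
    fix x assume "x \<in> prod_encode ` reached F s"
    then obtain w v where x: "x = prod_encode w" and v: "v \<in> init F" "reaches F v s w"
      unfolding reached_def by blast
    have "prod_encode v \<in> init (ren F)" using v by (simp add: ren_def)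
    moreover have "reaches (ren F) (prod_encode v) s x" using v x by (simp add: reaches_ren)
    ultimately show "x \<in> reached (ren F) s" unfolding reached_def by blast
  qed
qed

lemma lang_ren: "lang (ren F) = lang F"
  unfolding lang_def by (auto simp: reached_ren)

lemma outputs_ren: "outputs (ren F) s = outputs F s"
  unfolding outputs_def reached_ren by (auto simp: ren_def)

lemma wf_ren: "wf_device F \<Longrightarrow> wf_device (ren F)"
  unfolding wf_device_def ren_def by auto

theorem proposition3:
  fixes F1 :: "('v1, 'a, 'o1) device" and F2 :: "('v2, 'c, 'o2) device"
    and A :: "'a list set" and B :: "'b list set" and C :: "'c list set" and E :: "'e list set"
    and R1 :: "('a list \<times> 'b list) set" and R2 :: "('c list \<times> 'e list) set"
  assumes "wf_device F1" and "wf_device F2"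
    and "R1 \<subseteq> A \<times> B" and "R2 \<subseteq> C \<times> E"
    and "length_compatible A C R1 R2"
    and "output_simulatable F1 R1" and "output_simulatable F2 R2"
  shows "output_simulatable (direct_product F1 F2) (prod_rel R1 R2)"
proof -
  obtain G1 :: "(nat, 'b, 'o1) device" where G1: "output_simulates G1 F1 R1"
    using assms(6) unfolding output_simulatable_def by blast
  obtain G2 :: "(nat, 'e, 'o2) device" where G2: "output_simulates G2 F2 R2"
    using assms(7) unfolding output_simulatable_def by blast
  have G1w: "wf_device G1" and G1e: "\<And>s. s \<in> lang F1 \<Longrightarrow> \<exists>t\<in>lang G1. (s, t) \<in> R1"
    and G1a: "\<And>s t. s \<in> lang F1 \<Longrightarrow> (s, t) \<in> R1 \<Longrightarrow> t \<in> lang G1 \<and> outputs G1 t \<subseteq> outputs F1 s"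
    using G1 unfolding output_simulates_def by blast+
  have G2w: "wf_device G2" and G2e: "\<And>s. s \<in> lang F2 \<Longrightarrow> \<exists>t\<in>lang G2. (s, t) \<in> R2"
    and G2a: "\<And>s t. s \<in> lang F2 \<Longrightarrow> (s, t) \<in> R2 \<Longrightarrow> t \<in> lang G2 \<and> outputs G2 t \<subseteq> outputs F2 s"
    using G2 unfolding output_simulates_def by blast+
  have LC: "\<And>a c. a \<in> A \<Longrightarrow> c \<in> C \<Longrightarrow> length a = length c \<Longrightarrow>
        \<exists>b e. length b = length e \<and> (a, b) \<in> R1 \<and> (c, e) \<in> R2"
    using assms(5) unfolding length_compatible_def by blast
  define G where "G = ren (direct_product G1 G2)"
  have langG: "t \<in> lang G \<longleftrightarrow> map fst t \<in> lang G1 \<and> map snd t \<in> lang G2" for t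
    unfolding G_def lang_ren lang_prod ..
  have outG: "outputs G t = outputs G1 (map fst t) \<times> outputs G2 (map snd t)" for t
    unfolding G_def outputs_ren outputs_prod ..
  have wfG: "wf_device G" unfolding G_def using G1w G2w by (intro wf_ren wf_prod)
  have "output_simulates G (direct_product F1 F2) (prod_rel R1 R2)"
    unfolding output_simulates_def
  proof (intro conjI ballI allI impI)
    show "wf_device G" by (rule wfG)
  next
    fix s assume s: "s \<in> lang (direct_product F1 F2)"
    then have s1: "map fst s \<in> lang F1" and s2: "map snd s \<in> lang F2"
      by (simp_all add: lang_prod)
    obtain t1 where "(map fst s, t1) \<in> R1" using G1e[OF s1] by blast
    then have a: "map fst s \<in> A" using assms(3) by blast
    obtain t2 where "(map snd s, t2) \<in> R2" using G2e[OF s2] by blast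
    then have c: "map snd s \<in> C" using assms(4) by blast
    obtain b e where be: "length b = length e" "(map fst s, b) \<in> R1" "(map snd s, e) \<in> R2"
      using LC[OF a c] by auto
    have "b \<in> lang G1" using G1a[OF s1 be(2)] by blast
    moreover have "e \<in> lang G2" using G2a[OF s2 be(3)] by blast
    ultimately have "zip b e \<in> lang G" unfolding langG
      using be(1) by simp
    moreover have "(s, zip b e) \<in> prod_rel R1 R2"
      using be by (simp add: prod_rel_def)
    ultimately show "\<exists>t\<in>lang G. (s, t) \<in> prod_rel R1 R2" by blast
  next
    fix s t assume s: "s \<in> lang (direct_product F1 F2)" and st: "(s, t) \<in> prod_rel R1 R2"
    then have s1: "map fst s \<in> lang F1" and s2: "map snd s \<in> lang F2"
      by (simp_all add: lang_prod)
    have r1: "(map fst s, map fst t) \<in> R1" and r2: "(map snd s, map snd t) \<in> R2"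
      using st by (simp_all add: prod_rel_def)
    have h1: "map fst t \<in> lang G1 \<and> outputs G1 (map fst t) \<subseteq> outputs F1 (map fst s)"
      by (rule G1a[OF s1 r1])
    have h2: "map snd t \<in> lang G2 \<and> outputs G2 (map snd t) \<subseteq> outputs F2 (map snd s)"
      by (rule G2a[OF s2 r2])
    show "t \<in> lang G" unfolding langG using h1 h2 by blast
    show "outputs G t \<subseteq> outputs (direct_product F1 F2) s"
      unfolding outG outputs_prod using h1 h2 by (simp add: Sigma_mono)
  qed
  then show ?thesis unfolding output_simulatable_def by (rule exI[of _ G])
qed

end
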